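(* Let $a\in(0,1)$ and define the linear operator $T_a$ on complex-valued $L^1(\mathbb{R})$ by $T_a[f](y)=\int_{-\infty}^{\infty}\mathsf{sign}(x-ay)\,\phi(y-x)\,f(x)\,\mathrm{d}x$, with $\phi$ the standard Gaussian density. Let $\mathcal{N}_{L^1}(T_a)=\{f\in L^1(\mathbb{R}): T_a[f]=0\}$. Then $\mathcal{N}_{L^1}(T_a)$ is infinite-dimensional. Moreover, $$\mathrm{span}\left\{f_{\mu_n,\frac{a}{1-a},\omega_n} : (\mu_n,\omega_n)\in\mathbb{R}^2,\ \tfrac{1}{\sqrt2}\Big(\tfrac{1-a}{\sqrt a}\mu_n+j\sqrt a\,\omega_n\Big)\text{ is a zero of }\mathrm{erf}\right\}\subseteq\mathcal{N}_{L^1}(T_a),$$ where $f_{\mu,\sigma^2,\omega}(x)=\exp\!\left(-\frac{(x-\mu)^2}{2\sigma^2}\right)e^{jx\omega}$.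
   Context: $j=\sqrt{-1}$. $\mathrm{erf}(z)=\frac{2}{\sqrt\pi}\int_0^z e^{-t^2}\mathrm{d}t$ is the entire error function on $\mathbb{C}$; it has infinitely many complex zeros. *)

theory Defs
  imports "HOL-Complex_Analysis.Complex_Analysis"
begin

definition cerf :: "complex \<Rightarrow> complex" where
  "cerf z = (2 / complex_of_real (sqrt pi)) * contour_integral (linepath 0 z) (\<lambda>t. exp (- (t^2)))"

definition gauss_pdf :: "real \<Rightarrow> real" where
  "gauss_pdf x = exp (- (x^2) / 2) / sqrt (2 * pi)"

definition T_op :: "real \<Rightarrow> (real \<Rightarrow> complex) \<Rightarrow> real \<Rightarrow> complex" where
  "T_op a f y = (LINT x|lborel. complex_of_real (sgn (x - a * y) * gauss_pdf (y - x)) * f x)"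

definition null_L1 :: "real \<Rightarrow> (real \<Rightarrow> complex) set" where
  "null_L1 a = {f. integrable lborel f \<and> (\<forall>y. T_op a f y = 0)}"

definition gfun :: "real \<Rightarrow> real \<Rightarrow> real \<Rightarrow> real \<Rightarrow> complex" where
  "gfun \<mu> s2 \<omega> x = complex_of_real (exp (- ((x - \<mu>)^2) / (2 * s2))) * exp (\<i> * complex_of_real (x * \<omega>))"

definition cspan :: "('a \<Rightarrow> complex) set \<Rightarrow> ('a \<Rightarrow> complex) set" where
  "cspan S = {(\<lambda>x. \<Sum>g\<in>F. c g * g x) | F c. finite F \<and> F \<subseteq> S}"

end

theory Submission
  imports Defs "HOL-Probability.Probability" "HOL-Computational_Algebra.Fundamental_Theorem_Algebra" "HOL-Real_Asymp.Real_Asymp"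
begin

definition pint :: "complex \<Rightarrow> complex" where
  "pint z = contour_integral (linepath 0 z) (\<lambda>t. exp (- (t^2)))"

lemma cerf_pint: "cerf z = (2 / complex_of_real (sqrt pi)) * pint z"
  by (simp add: cerf_def pint_def)

lemma pint_diff: "pint w = pint v + contour_integral (linepath v w) (\<lambda>t. exp (- (t^2)))"
  and pint_hci: "((\<lambda>t. exp (- (t^2))) has_contour_integral (pint w - pint v)) (linepath v w)"
  and pint_deriv: "(pint has_field_derivative exp(-(w^2))) (at w)"
proof -
  obtain G :: "complex \<Rightarrow> complex" where G: "\<And>x::complex. x \<in> UNIV \<Longrightarrow> (G has_field_derivative exp(-(x^2))) (at x within UNIV)"
  proof -
    have "(\<lambda>t::complex. exp (- (t^2))) holomorphic_on UNIV" by (intro holomorphic_intros)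
    from holomorphic_convex_primitive'[OF convex_UNIV open_UNIV this] that show ?thesis by blast
  qed
  have hc: "((\<lambda>t. exp(-(t^2))) has_contour_integral (G w - G v)) (linepath v w)" for v w
    using contour_integral_primitive[OF G, of "linepath v w"] by auto
  have pw: "pint w = G w - G 0" for w
    unfolding pint_def using contour_integral_unique[OF hc[where v=0 and w=w]] by simp
  show "pint w = pint v + contour_integral (linepath v w) (\<lambda>t. exp (- (t^2)))"
    using contour_integral_unique[OF hc[where v=v and w=w]] pw by simp
  show "((\<lambda>t. exp (- (t^2))) has_contour_integral (pint w - pint v)) (linepath v w)"
    using hc[where v=v and w=w] pw by simp
  have "((\<lambda>w. G w - G 0) has_field_derivative exp(-(w^2))) (at w)"
    using G[of w] by (auto intro!: derivative_eq_intros)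
  moreover have "pint = (\<lambda>w. G w - G 0)" using pw by (simp add: fun_eq_iff)
  ultimately show "(pint has_field_derivative exp(-(w^2))) (at w)" by simp
qed

lemma pint_0[simp]: "pint 0 = 0"
  by (simp add: pint_def)

lemma pint_holo: "pint holomorphic_on S"
  using pint_deriv holomorphic_on_def field_differentiable_def
  by (metis field_differentiable_at_within)

lemma pint_odd: "pint (- z) = - pint z"
proof -
  have d: "((\<lambda>z. pint (- z) + pint z) has_field_derivative 0) (at z)" for z
  proof -
    have "((\<lambda>z. pint (- z) + pint z) has_field_derivative (exp(-((-z)^2)) * (-1) + exp(-(z^2)))) (at z)"
      by (rule derivative_eq_intros DERIV_chain2[OF pint_deriv] pint_deriv refl)+
    then show ?thesis by simp
  qed
  obtain c where "\<forall>x\<in>UNIV. pint (- x) + pint x = c"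
    using has_field_derivative_zero_constant[of UNIV "\<lambda>z. pint (- z) + pint z"] d by auto
  then have "pint (- z) + pint z = c" "pint (- 0) + pint 0 = c" by blast+
  then show ?thesis by (simp add: eq_neg_iff_add_eq_0)
qed

lemma norm_exp_neg_sq: "norm (exp (- ((t::complex)^2))) \<le> exp ((norm t)^2)"
proof -
  have 1: "Re (- (t^2)) \<le> norm (t^2)"
    using abs_Re_le_cmod[of "-(t^2)"] by simp
  show ?thesis using 1 by (simp add: norm_exp norm_power)
qed

lemma pint_bound: "norm (pint z) \<le> norm z * exp ((norm z)^2)"
proof -
  have "norm (pint z - pint 0) \<le> exp ((norm z)^2) * norm (z - 0)"
  proof (rule has_contour_integral_bound_linepath[OF pint_hci])
    fix x assume "x \<in> closed_segment 0 z"
    then have "norm x \<le> norm z"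
      by (metis closed_segment_commute diff_zero dist_0_norm dist_commute segment_bound1)
    then have "exp ((norm x)^2) \<le> exp ((norm z)^2)" by (simp add: power_mono)
    then show "norm (exp (- (x^2))) \<le> exp ((norm z)^2)"
      using norm_exp_neg_sq order_trans by blast
  qed auto
  then show ?thesis by (simp add: mult.commute)
qed

lemma E_deriv:
  fixes \<zeta> :: complex and s :: real
  assumes "s > 0"
  shows "((\<lambda>x. complex_of_real s * pint ((complex_of_real x - \<zeta>) / complex_of_real s)) has_vector_derivative
          exp (- (((complex_of_real x - \<zeta>) / complex_of_real s)^2))) (at x within S)"
proof -
  have "((\<lambda>z. complex_of_real s * pint ((z - \<zeta>) / complex_of_real s)) has_field_derivative
          complex_of_real s * (exp (- (((z - \<zeta>) / complex_of_real s)^2)) * (1 / complex_of_real s))) (at z)" for z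
  proof -
    have d1: "((\<lambda>z. (z - \<zeta>) / complex_of_real s) has_field_derivative (1 / complex_of_real s)) (at z)"
      using assms by (auto intro!: derivative_eq_intros)
    show ?thesis using DERIV_cmult[OF DERIV_chain2[OF pint_deriv d1], of "complex_of_real s"] by simp
  qed
  then have "((\<lambda>z. complex_of_real s * pint ((z - \<zeta>) / complex_of_real s)) has_field_derivative
          exp (- (((z - \<zeta>) / complex_of_real s)^2))) (at z)" for z
    using assms by simp
  from has_vector_derivative_real_field[OF this] show ?thesis .
qed

lemma norm_G:
  fixes \<zeta> :: complex and s x :: real
  assumes "s > 0"
  shows "norm (exp (- (((complex_of_real x - \<zeta>) / complex_of_real s)^2)))
       = exp ((Im \<zeta>)^2 / s^2) * exp (- ((x - Re \<zeta>)^2) / s^2)"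
proof -
  have "Re (- (((complex_of_real x - \<zeta>) / complex_of_real s)^2)) = (Im \<zeta>)^2 / s^2 + (- ((x - Re \<zeta>)^2) / s^2)"
    using assms by (simp add: power2_eq_square field_simps)
  then have "norm (exp (- (((complex_of_real x - \<zeta>) / complex_of_real s)^2)))
       = exp ((Im \<zeta>)^2 / s^2 + (- ((x - Re \<zeta>)^2) / s^2))" by (simp add: norm_exp)
  then show ?thesis by (simp only: exp_add)
qed

lemma integrable_gauss_shift:
  fixes m s :: real
  assumes "s > 0"
  shows "integrable lborel (\<lambda>x. exp (- ((x - m)^2) / s^2))"
proof -
  define \<sigma> where "\<sigma> = s / sqrt 2"
  have \<sigma>: "\<sigma> > 0" "2 * \<sigma>^2 = s^2" using assms by (auto simp: \<sigma>_def power_divide)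
  have "integrable lborel (\<lambda>x. sqrt (2 * pi * \<sigma>^2) * normal_density m \<sigma> x)"
    using \<sigma> by auto
  moreover have "sqrt (2 * pi * \<sigma>^2) * normal_density m \<sigma> x = exp (- ((x - m)^2) / s^2)" for x
    using \<sigma> by (simp add: normal_density_def)
  ultimately show ?thesis by simp
qed

lemma integrable_G:
  fixes \<zeta> :: complex and s :: real
  assumes "s > 0"
  shows "integrable lborel (\<lambda>x. exp (- (((complex_of_real x - \<zeta>) / complex_of_real s)^2)))"
proof (rule Bochner_Integration.integrable_bound)
  show "integrable lborel (\<lambda>x. exp ((Im \<zeta>)^2 / s^2) * exp (- ((x - Re \<zeta>)^2) / s^2))"
    using integrable_gauss_shift[OF assms] by auto
  show "(\<lambda>x. exp (- (((complex_of_real x - \<zeta>) / complex_of_real s)^2))) \<in> borel_measurable lborel"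
    by measurable
  show "AE x in lborel. norm (exp (- (((complex_of_real x - \<zeta>) / complex_of_real s)^2)))
         \<le> norm (exp ((Im \<zeta>)^2 / s^2) * exp (- ((x - Re \<zeta>)^2) / s^2))"
    using norm_G[OF assms] by simp
qed

lemma integrable_H:
  fixes \<zeta> :: complex and s b :: real
  assumes "s > 0"
  shows "integrable lborel (\<lambda>x. complex_of_real (sgn (x - b)) * exp (- (((complex_of_real x - \<zeta>) / complex_of_real s)^2)))"
proof (rule Bochner_Integration.integrable_bound[OF integrable_G[OF assms, of \<zeta>]])
  show "(\<lambda>x. complex_of_real (sgn (x - b)) * exp (- (((complex_of_real x - \<zeta>) / complex_of_real s)^2))) \<in> borel_measurable lborel"
    by measurable
  show "AE x in lborel. norm (complex_of_real (sgn (x - b)) * exp (- (((complex_of_real x - \<zeta>) / complex_of_real s)^2)))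
         \<le> norm (exp (- (((complex_of_real x - \<zeta>) / complex_of_real s)^2)))"
    by (simp add: norm_mult mult_left_le_one_le sgn_real_def)
qed

definition "Gf \<zeta> s x = exp (- (((complex_of_real x - \<zeta>) / complex_of_real s)^2))"
definition "Ef \<zeta> s x = complex_of_real s * pint ((complex_of_real x - \<zeta>) / complex_of_real s)"
definition "Hf \<zeta> s b x = complex_of_real (sgn (x - b)) * Gf \<zeta> s x"

lemma re_sq_lower:
  fixes t :: complex and m r :: real
  assumes "norm (t - complex_of_real m) \<le> r" "r \<le> m"
  shows "(m - r)^2 - r^2 \<le> Re (t^2)"
proof -
  have 1: "\<bar>Re t - m\<bar> \<le> r" using abs_Re_le_cmod[of "t - complex_of_real m"] assms by simp
  have 2: "\<bar>Im t\<bar> \<le> r" using abs_Im_le_cmod[of "t - complex_of_real m"] assms by simp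
  have "0 \<le> m - r" using assms by simp
  moreover have "m - r \<le> Re t" using 1 by linarith
  ultimately have 3: "(m - r)^2 \<le> (Re t)^2" by (simp add: power_mono)
  have 4: "(Im t)^2 \<le> r^2" using 2 by (metis abs_le_square_iff abs_of_nonneg dual_order.trans abs_ge_zero)
  have "Re (t^2) = (Re t)^2 - (Im t)^2" by (simp add: power2_eq_square)
  then show ?thesis using 3 4 by linarith
qed

context
  fixes \<zeta> :: complex and s b :: real
  assumes s: "s > 0"
begin

lemma Hf_int_right:
  assumes "b \<le> n"
  shows "(Hf \<zeta> s b has_integral (Ef \<zeta> s n - Ef \<zeta> s b)) {b..n}"
proof -
  have "(Gf \<zeta> s has_integral (Ef \<zeta> s n - Ef \<zeta> s b)) {b..n}"
    using fundamental_theorem_of_calculus[OF assms, of "Ef \<zeta> s" "Gf \<zeta> s"] E_deriv[OF s]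
    unfolding Gf_def Ef_def by blast
  moreover have "x \<in> {b..n} - {b} \<Longrightarrow> Hf \<zeta> s b x = Gf \<zeta> s x" for x by (auto simp: Hf_def)
  ultimately show ?thesis using has_integral_spike_finite_eq[of "{b}" "{b..n}" "Hf \<zeta> s b" "Gf \<zeta> s"] by blast
qed

lemma Hf_int_left:
  assumes "m \<le> b"
  shows "(Hf \<zeta> s b has_integral (- (Ef \<zeta> s b - Ef \<zeta> s m))) {m..b}"
proof -
  have "(Gf \<zeta> s has_integral (Ef \<zeta> s b - Ef \<zeta> s m)) {m..b}"
    using fundamental_theorem_of_calculus[OF assms, of "Ef \<zeta> s" "Gf \<zeta> s"] E_deriv[OF s]
    unfolding Gf_def Ef_def by blast
  then have "((\<lambda>x. - Gf \<zeta> s x) has_integral (- (Ef \<zeta> s b - Ef \<zeta> s m))) {m..b}"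
    by (rule has_integral_neg)
  moreover have "x \<in> {m..b} - {b} \<Longrightarrow> Hf \<zeta> s b x = - Gf \<zeta> s x" for x by (auto simp: Hf_def)
  ultimately show ?thesis using has_integral_spike_finite_eq[of "{b}" "{m..b}" "Hf \<zeta> s b" "\<lambda>x. - Gf \<zeta> s x"] by blast
qed

lemma Hf_int_sym:
  assumes "\<bar>b\<bar> \<le> n"
  shows "(Hf \<zeta> s b has_integral (Ef \<zeta> s n + Ef \<zeta> s (-n) - 2 * Ef \<zeta> s b)) {-n..n}"
proof -
  have "(Hf \<zeta> s b has_integral (- (Ef \<zeta> s b - Ef \<zeta> s (-n)) + (Ef \<zeta> s n - Ef \<zeta> s b))) {-n..n}"
    using assms by (intro has_integral_combine[OF _ _ Hf_int_left Hf_int_right]) auto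
  then show ?thesis by (simp add: algebra_simps)
qed

lemma integrable_Hf: "integrable lborel (Hf \<zeta> s b)"
  using integrable_H[OF s, of b \<zeta>] unfolding Hf_def Gf_def .

lemma Hf_set_int:
  assumes "\<bar>b\<bar> \<le> n"
  shows "(LINT x:{-n..n}|lborel. Hf \<zeta> s b x) = Ef \<zeta> s n + Ef \<zeta> s (-n) - 2 * Ef \<zeta> s b"
proof -
  have "set_integrable lborel {-n..n} (Hf \<zeta> s b)"
    unfolding set_integrable_def by (rule integrable_mult_indicator[OF _ integrable_Hf]) auto
  from set_borel_integral_eq_integral(2)[OF this] show ?thesis
    using integral_unique[OF Hf_int_sym[OF assms]] by simp
qed

lemma Ef_sum_lim: "((\<lambda>n. Ef \<zeta> s n + Ef \<zeta> s (-n)) \<longlongrightarrow> 0) at_top"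
proof -
  define c where "c = norm \<zeta>"
  have c0: "c \<ge> 0" by (simp add: c_def)
  have bound: "norm (Ef \<zeta> s n + Ef \<zeta> s (-n)) \<le> 2 * c * exp (- (n * (n - 2 * c)) / s^2)"
    if n: "n \<ge> c" for n
  proof -
    define u where "u = (complex_of_real n - \<zeta>) / complex_of_real s"
    define v where "v = (complex_of_real n + \<zeta>) / complex_of_real s"
    have "(complex_of_real (-n) - \<zeta>) / complex_of_real s = - v" using s by (simp add: v_def field_simps)
    then have Eq: "Ef \<zeta> s n + Ef \<zeta> s (-n) = complex_of_real s * (pint u - pint v)"
      by (simp add: Ef_def u_def pint_odd algebra_simps)
    moreover have "norm (pint u - pint v) \<le> exp (- (n * (n - 2 * c)) / s^2) * norm (u - v)"
    proof (rule has_contour_integral_bound_linepath[OF pint_hci])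
      fix t assume t: "t \<in> closed_segment v u"
      have "closed_segment v u \<subseteq> cball (complex_of_real (n / s)) (c / s)"
      proof (rule closed_segment_subset)
        show "v \<in> cball (complex_of_real (n / s)) (c / s)"
          using s by (simp add: v_def dist_norm c_def diff_divide_distrib[symmetric] norm_divide)
        show "u \<in> cball (complex_of_real (n / s)) (c / s)"
          using s by (simp add: u_def dist_norm c_def diff_divide_distrib[symmetric] norm_divide)
      qed auto
      with t have "norm (t - complex_of_real (n / s)) \<le> c / s"
        by (auto simp: dist_norm norm_minus_commute)
      then have "(n / s - c / s)^2 - (c / s)^2 \<le> Re (t^2)"
        by (rule re_sq_lower) (use s n in \<open>simp add: divide_right_mono\<close>)
      moreover have "(n / s - c / s)^2 - (c / s)^2 = n * (n - 2 * c) / s^2"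
        using s by (simp add: field_simps power2_eq_square)
      ultimately have "- Re (t^2) \<le> - (n * (n - 2 * c)) / s^2" by simp
      then show "norm (exp (- (t^2))) \<le> exp (- (n * (n - 2 * c)) / s^2)"
        by (simp add: norm_exp)
    qed auto
    moreover have "norm (u - v) = 2 * c / s"
    proof -
      have "u - v = - 2 * \<zeta> / complex_of_real s" using s by (simp add: u_def v_def field_simps)
      then show ?thesis using s by (simp add: norm_divide norm_mult c_def)
    qed
    ultimately have "s * norm (pint u - pint v) \<le> s * (exp (- (n * (n - 2 * c)) / s^2) * (2 * c / s))"
      using s by (intro mult_left_mono) auto
    moreover have "norm (Ef \<zeta> s n + Ef \<zeta> s (-n)) = s * norm (pint u - pint v)"
      using s Eq by (simp add: norm_mult)
    moreover have "s * (exp (- (n * (n - 2 * c)) / s^2) * (2 * c / s)) = 2 * c * exp (- (n * (n - 2 * c)) / s^2)"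
      using s by simp
    ultimately show ?thesis by simp
  qed
  have lim: "((\<lambda>n. 2 * c * exp (- (n * (n - 2 * c)) / s^2)) \<longlongrightarrow> 0) at_top"
    using s by real_asymp
  show ?thesis
    by (rule Lim_null_comparison[OF _ lim]) (use bound in \<open>auto intro: eventually_at_top_linorderI[of c]\<close>)
qed

lemma LINT_Hf: "(LINT x|lborel. Hf \<zeta> s b x) = - 2 * Ef \<zeta> s b"
proof -
  define S where "S = (\<lambda>(i::nat) x. indicator {- real i..real i} x *\<^sub>R Hf \<zeta> s b x)"
  have conv: "(\<lambda>i. integral\<^sup>L lborel (S i)) \<longlonglongrightarrow> integral\<^sup>L lborel (Hf \<zeta> s b)"
  proof (rule integral_dominated_convergence[where w = "\<lambda>x. norm (Hf \<zeta> s b x)"])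
    show "Hf \<zeta> s b \<in> borel_measurable lborel" using integrable_Hf by auto
    show "S i \<in> borel_measurable lborel" for i unfolding S_def using integrable_Hf by auto
    show "integrable lborel (\<lambda>x. norm (Hf \<zeta> s b x))" using integrable_Hf by auto
    show "AE x in lborel. (\<lambda>i. S i x) \<longlonglongrightarrow> Hf \<zeta> s b x"
    proof (rule AE_I2, rule tendsto_eventually)
      fix x :: real
      obtain N :: nat where "\<bar>x\<bar> \<le> real N" using real_arch_simple by blast
      then show "eventually (\<lambda>i. S i x = Hf \<zeta> s b x) sequentially"
        by (intro eventually_sequentiallyI[of N]) (auto simp: S_def indicator_def)
    qed
    show "AE x in lborel. norm (S i x) \<le> norm (Hf \<zeta> s b x)" for i
      by (auto simp: S_def indicator_def)
  qed
  have vals: "eventually (\<lambda>i. Ef \<zeta> s (real i) + Ef \<zeta> s (- real i) - 2 * Ef \<zeta> s b = integral\<^sup>L lborel (S i)) sequentially"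
  proof -
    obtain N :: nat where "\<bar>b\<bar> \<le> real N" using real_arch_simple by blast
    then show ?thesis
      using Hf_set_int unfolding S_def set_lebesgue_integral_def
      by (intro eventually_sequentiallyI[of N]) (auto intro!: Hf_set_int)
  qed
  have "((\<lambda>i. Ef \<zeta> s (real i) + Ef \<zeta> s (- real i)) \<longlongrightarrow> 0) sequentially"
    using filterlim_compose[OF Ef_sum_lim filterlim_real_sequentially] by (simp add: o_def)
  then have "((\<lambda>i. Ef \<zeta> s (real i) + Ef \<zeta> s (- real i) - 2 * Ef \<zeta> s b) \<longlongrightarrow> 0 - 2 * Ef \<zeta> s b) sequentially"
    by (intro tendsto_intros)
  then have "(\<lambda>i. integral\<^sup>L lborel (S i)) \<longlonglongrightarrow> 0 - 2 * Ef \<zeta> s b"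
    using vals by (rule Lim_transform_eventually)
  with conv show ?thesis using LIMSEQ_unique by fastforce
qed

end

lemma exponent_id:
  fixes a y x \<mu> \<omega> :: real
  assumes a: "0 < a" "a < 1"
  defines "\<zeta> \<equiv> complex_of_real (a*y + (1-a)*\<mu>) + \<i> * complex_of_real (a*\<omega>)"
  shows "complex_of_real (- ((y - x)^2) / 2) + complex_of_real (- ((x - \<mu>)^2) / (2 * (a / (1 - a))))
          + \<i> * complex_of_real (x * \<omega>)
       = (complex_of_real (- (y^2) / 2 - (1 - a) * \<mu>^2 / (2 * a)) + \<zeta>^2 / complex_of_real (2 * a))
          + (- ((complex_of_real x - \<zeta>)^2 / complex_of_real (2 * a)))"
  using a unfolding \<zeta>_def
  by (simp add: complex_eq_iff power2_eq_square field_simps)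

lemma integrable_gfun:
  assumes "s2 > 0"
  shows "integrable lborel (gfun \<mu> s2 \<omega>)"
proof (rule Bochner_Integration.integrable_bound)
  define s where "s = sqrt (2 * s2)"
  have s: "s > 0" "s^2 = 2 * s2" using assms by (auto simp: s_def)
  show "integrable lborel (\<lambda>x. exp (- ((x - \<mu>)^2) / s^2))"
    using integrable_gauss_shift[OF s(1)] .
  show "gfun \<mu> s2 \<omega> \<in> borel_measurable lborel"
    unfolding gfun_def by measurable
  show "AE x in lborel. norm (gfun \<mu> s2 \<omega> x) \<le> norm (exp (- ((x - \<mu>)^2) / s^2))"
    using s by (simp add: gfun_def norm_mult)
qed

lemma arg_id:
  fixes a y \<mu> \<omega> :: real
  assumes a: "0 < a" "a < 1"
  shows "(complex_of_real (a*y) - (complex_of_real (a*y + (1-a)*\<mu>) + \<i> * complex_of_real (a*\<omega>)))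
           / complex_of_real (sqrt (2 * a))
       = - ((1 / complex_of_real (sqrt 2)) *
            (complex_of_real ((1 - a) / sqrt a * \<mu>) + \<i> * complex_of_real (sqrt a * \<omega>)))"
proof -
  have sa: "sqrt a > 0" "sqrt a * sqrt a = a" using a by auto
  have s2: "sqrt (2 * a) = sqrt 2 * sqrt a" by (simp add: real_sqrt_mult)
  show ?thesis using sa unfolding s2
    by (simp add: complex_eq_iff field_simps)
qed

lemma gfun_null:
  fixes a \<mu> \<omega> :: real
  assumes a: "0 < a" "a < 1"
    and z: "cerf ((1 / complex_of_real (sqrt 2)) *
             (complex_of_real ((1 - a) / sqrt a * \<mu>) + \<i> * complex_of_real (sqrt a * \<omega>))) = 0"
  shows "gfun \<mu> (a / (1 - a)) \<omega> \<in> null_L1 a"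
proof -
  define z0 where "z0 = (1 / complex_of_real (sqrt 2)) *
             (complex_of_real ((1 - a) / sqrt a * \<mu>) + \<i> * complex_of_real (sqrt a * \<omega>))"
  have p0: "pint z0 = 0" using z unfolding z0_def cerf_pint by simp
  define s where "s = sqrt (2 * a)"
  have s: "s > 0" "complex_of_real s ^ 2 = complex_of_real (2 * a)"
    using a by (auto simp: s_def simp flip: of_real_power)
  have intg: "integrable lborel (gfun \<mu> (a / (1 - a)) \<omega>)"
    using a by (intro integrable_gfun) auto
  have "T_op a (gfun \<mu> (a / (1 - a)) \<omega>) y = 0" for y
  proof -
    define \<zeta> where "\<zeta> = complex_of_real (a*y + (1-a)*\<mu>) + \<i> * complex_of_real (a*\<omega>)"
    define K where "K = complex_of_real (- (y^2) / 2 - (1 - a) * \<mu>^2 / (2 * a)) + \<zeta>^2 / complex_of_real (2 * a)"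
    define A where "A = exp K / complex_of_real (sqrt (2 * pi))"
    have pt: "complex_of_real (sgn (x - a * y) * gauss_pdf (y - x)) * gfun \<mu> (a / (1 - a)) \<omega> x
              = A * Hf \<zeta> s (a * y) x" for x
    proof -
      have e1: "exp (complex_of_real (- ((y - x)^2) / 2)) * exp (complex_of_real (- ((x - \<mu>)^2) / (2 * (a / (1 - a)))))
                 * exp (\<i> * complex_of_real (x * \<omega>))
              = exp K * exp (- ((complex_of_real x - \<zeta>)^2 / complex_of_real (2 * a)))"
        unfolding exp_add[symmetric] K_def \<zeta>_def by (subst exponent_id[OF a]) simp
      have e2: "((complex_of_real x - \<zeta>) / complex_of_real s)^2 = (complex_of_real x - \<zeta>)^2 / complex_of_real (2 * a)"
        by (simp add: power_divide s(2))
      show ?thesis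
        unfolding Hf_def Gf_def gauss_pdf_def gfun_def A_def e2
        using e1 by (simp add: exp_of_real[symmetric] mult_ac)
    qed
    have "T_op a (gfun \<mu> (a / (1 - a)) \<omega>) y = (LINT x|lborel. A * Hf \<zeta> s (a * y) x)"
      unfolding T_op_def using pt by simp
    also have "\<dots> = A * (LINT x|lborel. Hf \<zeta> s (a * y) x)" by simp
    also have "\<dots> = A * (- 2 * Ef \<zeta> s (a * y))" using LINT_Hf[OF s(1)] by simp
    also have "Ef \<zeta> s (a * y) = 0"
      unfolding Ef_def s_def \<zeta>_def arg_id[OF a] using p0 unfolding z0_def by (simp add: pint_odd)
    finally show ?thesis by simp
  qed
  then show ?thesis unfolding null_L1_def using intg by auto
qed

lemma integrable_kernel:
  assumes "integrable lborel g"
  shows "integrable lborel (\<lambda>x. complex_of_real (sgn (x - a * y) * gauss_pdf (y - x)) * g x)"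
proof (rule Bochner_Integration.integrable_bound[OF assms])
  have "g \<in> borel_measurable lborel" using assms by auto
  then show "(\<lambda>x. complex_of_real (sgn (x - a * y) * gauss_pdf (y - x)) * g x) \<in> borel_measurable lborel"
    unfolding gauss_pdf_def by measurable
  have "gauss_pdf t \<le> 1" for t
  proof -
    have "exp (- (t^2) / 2) \<le> 1" by simp
    moreover have "1 \<le> sqrt (2 * pi)" using pi_gt3 by simp
    ultimately show ?thesis unfolding gauss_pdf_def
      by (meson divide_le_eq_1 exp_gt_zero less_le_trans not_less zero_less_one)
  qed
  moreover have "0 \<le> gauss_pdf t" for t by (simp add: gauss_pdf_def)
  ultimately have "norm (complex_of_real (sgn (x - a * y) * gauss_pdf (y - x))) \<le> 1" for x
    by (auto simp: sgn_real_def abs_mult)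
  then show "AE x in lborel. norm (complex_of_real (sgn (x - a * y) * gauss_pdf (y - x)) * g x) \<le> norm (g x)"
    by (intro AE_I2) (simp only: norm_mult, metis mult_left_le_one_le norm_ge_zero)
qed

lemma cspan_null:
  assumes "S \<subseteq> null_L1 a"
  shows "cspan S \<subseteq> null_L1 a"
proof
  fix f assume "f \<in> cspan S"
  then obtain F c where f: "f = (\<lambda>x. \<Sum>g\<in>F. c g * g x)" and F: "finite F" "F \<subseteq> S"
    unfolding cspan_def by blast
  have gi: "integrable lborel g" and gt: "\<And>y. T_op a g y = 0" if "g \<in> F" for g
    using that F assms unfolding null_L1_def by auto
  have "integrable lborel f" unfolding f using gi by auto
  moreover have "T_op a f y = 0" for y
  proof -
    have "T_op a f y = (LINT x|lborel. (\<Sum>g\<in>F. c g * (complex_of_real (sgn (x - a * y) * gauss_pdf (y - x)) * g x)))"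
      unfolding T_op_def f by (simp add: sum_distrib_left mult_ac)
    also have "\<dots> = (\<Sum>g\<in>F. c g * T_op a g y)"
      unfolding T_op_def
      using Bochner_Integration.integral_sum[where I=F and M=lborel and f="\<lambda>g x. c g * (complex_of_real (sgn (x - a * y) * gauss_pdf (y - x)) * g x)"]
        integrable_kernel[OF gi] by auto
    also have "\<dots> = 0" using gt by simp
    finally show ?thesis .
  qed
  ultimately show "f \<in> null_L1 a" unfolding null_L1_def by auto
qed

lemma exp_indep:
  fixes lam d :: "nat \<Rightarrow> complex"
  assumes "inj_on lam {..<n}" "\<And>x::real. (\<Sum>i<n. d i * exp (lam i * complex_of_real x)) = 0"
  shows "\<forall>i<n. d i = 0"
  using assms
proof (induction n arbitrary: lam d)
  case 0
  then show ?case by simp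
next
  case (Suc n)
  define L where "L = lam n"
  define F where "F = (\<lambda>z::complex. \<Sum>i<Suc n. d i * exp ((lam i - L) * z))"
  have F0: "F (complex_of_real x) = 0" for x
  proof -
    have "F (complex_of_real x) = exp (- L * complex_of_real x) * (\<Sum>i<Suc n. d i * exp (lam i * complex_of_real x))"
      unfolding F_def by (simp add: sum_distrib_left algebra_simps exp_diff exp_minus field_simps)
    then show ?thesis using Suc.prems(2) by simp
  qed
  have dF: "(F has_field_derivative (\<Sum>i<Suc n. d i * ((lam i - L) * exp ((lam i - L) * z)))) (at z)" for z
    unfolding F_def by (auto intro!: derivative_eq_intros sum.cong simp: algebra_simps)
  have D0: "(\<Sum>i<Suc n. d i * ((lam i - L) * exp ((lam i - L) * complex_of_real x))) = 0" for x :: real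
  proof -
    have 1: "((\<lambda>x. F (complex_of_real x)) has_vector_derivative
        (\<Sum>i<Suc n. d i * ((lam i - L) * exp ((lam i - L) * complex_of_real x)))) (at x)"
      by (rule has_vector_derivative_real_field[OF dF])
    have 2: "((\<lambda>x. F (complex_of_real x)) has_vector_derivative 0) (at x)"
      using F0 by simp
    show ?thesis using vector_derivative_unique_at[OF 1 2] .
  qed
  have inj': "inj_on (\<lambda>i. lam i - L) {..<n}"
    using Suc.prems(1) by (auto simp: inj_on_def)
  have "(\<Sum>i<n. (d i * (lam i - L)) * exp ((lam i - L) * complex_of_real x)) = 0" for x :: real
    using D0[of x] by (simp add: L_def mult_ac)
  from Suc.IH[OF inj' this] have dn: "\<forall>i<n. d i * (lam i - L) = 0" .
  have neq: "lam i \<noteq> L" if "i < n" for i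
    using Suc.prems(1) that unfolding L_def inj_on_def by force
  have di: "\<forall>i<n. d i = 0" using dn neq by auto
  have "d n * exp (lam n * complex_of_real 0) = 0"
    using Suc.prems(2)[of 0] di by simp
  then have "d n = 0" by simp
  with di show ?case using less_Suc_eq by auto
qed

lemma AE_zero_continuous:
  fixes f :: "real \<Rightarrow> complex"
  assumes "continuous_on UNIV f" "AE x in lborel. f x = 0"
  shows "f x = 0"
proof (rule ccontr)
  assume nz: "f x \<noteq> 0"
  have "open (f -` (- {0}))"
    using assms(1) by (intro open_vimage) auto
  moreover have "x \<in> f -` (- {0})" using nz by simp
  ultimately obtain e where e: "e > 0" "ball x e \<subseteq> f -` (- {0})"
    using open_contains_ball by blast
  from AE_E[OF assms(2)] obtain N where N: "{y \<in> space lborel. f y \<noteq> 0} \<subseteq> N"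
      "emeasure lborel N = 0" "N \<in> sets lborel" by blast
  have "ball x e \<subseteq> N" using e N by auto
  then have "emeasure lborel (ball x e) \<le> emeasure lborel N"
    using N by (intro emeasure_mono) auto
  moreover have "ball x e = {x - e <..< x + e}"
    by (auto simp: ball_def dist_real_def)
  moreover have "emeasure lborel {x - e <..< x + e} = ennreal (2 * e)"
    using e by simp
  ultimately show False using N e by simp
qed

lemma BC_lemma:
  fixes h :: "complex \<Rightarrow> complex"
  assumes hol: "h holomorphic_on UNIV" and h0: "h 0 = 0" and AB: "A \<ge> 0" "B \<ge> 0"
    and re: "\<And>z. Re (h z) \<le> A + B * (norm z)^2"
  shows "norm (h z) \<le> 2 * (A + 4 * B * (norm z)^2 + 1)"
proof (cases "z = 0")
  case True
  then show ?thesis using h0 AB by simp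
next
  case False
  define R where "R = 2 * norm z"
  define M where "M = A + B * R^2 + 1"
  have R: "R > 0" using False by (simp add: R_def)
  have M: "M > 0" using AB unfolding M_def by (metis add_nonneg_nonneg zero_le_power2 mult_nonneg_nonneg add_pos_nonneg zero_less_one add.commute)
  have reM: "Re (h w) < M" if "norm w \<le> R" for w
  proof -
    have "(norm w)^2 \<le> R^2" using that by (simp add: power_mono)
    then have "B * (norm w)^2 \<le> B * R^2" using AB by (simp add: mult_left_mono)
    then show ?thesis using re[of w] by (simp add: M_def)
  qed
  have lt: "norm (h w) < norm (2 * complex_of_real M - h w)" if "norm w \<le> R" for w
  proof -
    have "(norm (2 * complex_of_real M - h w))^2 - (norm (h w))^2 = 4 * M * (M - Re (h w))"
      by (simp only: cmod_power2) (simp add: power2_eq_square algebra_simps)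
    also have "\<dots> > 0" using reM[OF that] M by simp
    finally have "(norm (h w))^2 < (norm (2 * complex_of_real M - h w))^2" by simp
    then show ?thesis by (rule power2_less_imp_less) simp
  qed
  have den: "2 * complex_of_real M - h w \<noteq> 0" if "norm w \<le> R" for w
    using lt[OF that] by auto
  define \<phi> where "\<phi> = (\<lambda>\<xi>. h (complex_of_real R * \<xi>) / (2 * complex_of_real M - h (complex_of_real R * \<xi>)))"
  have nR: "norm (complex_of_real R * \<xi>) \<le> R" if "\<xi> \<in> ball 0 1" for \<xi>
    using that R by (simp add: norm_mult)
  have hol\<phi>: "\<phi> holomorphic_on ball 0 1"
    unfolding \<phi>_def
    by (intro holomorphic_intros holomorphic_on_compose_gen[OF _ hol, unfolded o_def] den nR) auto
  have \<phi>0: "\<phi> 0 = 0" by (simp add: \<phi>_def h0)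
  have \<phi>lt: "norm (\<phi> \<xi>) < 1" if "norm \<xi> < 1" for \<xi>
  proof -
    have "norm (complex_of_real R * \<xi>) \<le> R" using nR that by simp
    from lt[OF this] show ?thesis
      by (simp add: \<phi>_def norm_divide divide_less_eq)
  qed
  define \<xi>0 where "\<xi>0 = z / complex_of_real R"
  have n\<xi>0: "norm \<xi>0 = 1/2" using R by (simp add: \<xi>0_def norm_divide R_def)
  have Rz: "complex_of_real R * \<xi>0 = z" using R by (simp add: \<xi>0_def)
  have q: "norm (\<phi> \<xi>0) \<le> 1/2"
    using Schwarz_Lemma(1)[OF hol\<phi> \<phi>0 \<phi>lt, of \<xi>0] n\<xi>0 by simp
  define q where "q = \<phi> \<xi>0"
  have Dz: "2 * complex_of_real M - h z \<noteq> 0" using den[of z] R by (simp add: R_def)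
  have qdef: "q = h z / (2 * complex_of_real M - h z)" by (simp add: q_def \<phi>_def Rz)
  have eq: "h z * (1 + q) = 2 * complex_of_real M * q"
    using Dz unfolding qdef by (simp add: field_simps)
  have "norm (h z) * norm (1 + q) = 2 * M * norm q"
    using arg_cong[OF eq, of norm] M by (simp add: norm_mult)
  moreover have "norm (1 + q) \<ge> 1/2"
    using q norm_triangle_ineq2[of 1 "-q"] unfolding q_def by simp
  moreover have "2 * M * norm q \<le> M" using q M unfolding q_def by simp
  ultimately have "norm (h z) * (1/2) \<le> M"
    by (metis (no_types, opaque_lifting) mult_left_mono norm_ge_zero order_trans)
  then have "norm (h z) \<le> 2 * M" by simp
  also have "2 * M = 2 * (A + 4 * B * (norm z)^2 + 1)"
    by (simp add: M_def R_def power_mult_distrib)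
  finally show ?thesis .
qed

lemma factor_zeros:
  fixes f :: "complex \<Rightarrow> complex"
  assumes hol: "f holomorphic_on UNIV" and fin: "finite Z" and zer: "\<And>w. w \<in> Z \<Longrightarrow> f w = 0"
  shows "\<exists>R. R holomorphic_on UNIV \<and> (\<forall>z. f z = poly (\<Prod>w\<in>Z. [:-w, 1:]) z * R z)"
  using fin zer
proof (induction Z rule: finite_induct)
  case empty
  then show ?case using hol by auto
next
  case (insert w Z)
  then obtain R0 where R0: "R0 holomorphic_on UNIV" "\<And>z. f z = poly (\<Prod>w\<in>Z. [:-w, 1:]) z * R0 z"
    by auto
  have pnz: "poly (\<Prod>w\<in>Z. [:-w, 1:]) w \<noteq> 0"
    using insert.hyps by (auto simp: poly_prod)
  have "R0 w = 0" using R0(2)[of w] insert.prems[of w] pnz by simp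
  define R1 where "R1 = (\<lambda>z. if z = w then deriv R0 w else (R0 z - R0 w) / (z - w))"
  have hol1: "R1 holomorphic_on UNIV"
    unfolding R1_def by (rule pole_lemma[OF R0(1)]) auto
  have r: "R0 z = (z - w) * R1 z" for z
    using \<open>R0 w = 0\<close> by (simp add: R1_def)
  have "f z = poly (\<Prod>w\<in>insert w Z. [:-w, 1:]) z * R1 z" for z
  proof -
    have "f z = poly (\<Prod>w\<in>Z. [:-w, 1:]) z * ((z - w) * R1 z)" using R0(2)[of z] r[of z] by simp
    also have "\<dots> = poly (\<Prod>w\<in>insert w Z. [:-w, 1:]) z * R1 z"
      using insert.hyps by (simp add: mult_ac left_diff_distrib)
    finally show ?thesis .
  qed
  with hol1 show ?case by blast
qed

lemma pint_zeros_infinite: "infinite {z. pint z = 0}"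
proof
  assume fin: "finite {z. pint z = 0}"
  define Z where "Z = {z. pint z = 0}"
  define P where "P = (\<Prod>w\<in>Z. [:-w, 1:])"
  have finZ: "finite Z" using fin by (simp add: Z_def)
  obtain R where Rhol: "R holomorphic_on UNIV" and eq: "\<And>z. pint z = poly P z * R z"
    using factor_zeros[OF pint_holo finZ] unfolding P_def Z_def by auto
  have polyP: "poly P z = (\<Prod>w\<in>Z. z - w)" for z by (simp add: P_def poly_prod)
  have Pnz: "P \<noteq> 0" unfolding P_def using finZ by (simp add: prod_zero_iff)
  have dR: "(R has_field_derivative deriv R z) (at z)" for z
    using holomorphic_derivI[OF Rhol] by auto
  have pint_eq: "pint = (\<lambda>z. poly P z * R z)" using eq by (simp add: fun_eq_iff)
  have Rnz: "R z \<noteq> 0" for z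
  proof
    assume R0: "R z = 0"
    then have "z \<in> Z" using eq[of z] by (simp add: Z_def)
    then have P0: "poly P z = 0" using finZ by (simp add: polyP)
    have d2: "((\<lambda>z. poly P z * R z) has_field_derivative (poly (pderiv P) z * R z + poly P z * deriv R z)) (at z)"
      by (rule DERIV_cong[OF DERIV_mult[OF poly_DERIV dR]]) (simp add: mult_ac)
    have "exp (- (z^2)) = poly (pderiv P) z * R z + poly P z * deriv R z"
      using DERIV_unique[OF pint_deriv[of z] d2[folded pint_eq]] .
    then show False using R0 P0 by simp
  qed
  have "\<exists>g. g holomorphic_on UNIV \<and> (\<forall>z. R z = exp (g z))"
    by (rule contractible_imp_holomorphic_log[OF Rhol contractible_UNIV]) (use Rnz in auto)
  then obtain g where ghol: "g holomorphic_on UNIV" and Rg: "\<And>z. R z = exp (g z)"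
    by blast
  define r0 where "r0 = 1 + (\<Sum>w\<in>Z. norm w)"
  have far: "norm (R z) \<le> exp (2 * (norm z)^2)" if z: "norm z \<ge> r0" for z
  proof -
    have "1 \<le> norm (z - w)" if "w \<in> Z" for w
    proof -
      have "norm w \<le> (\<Sum>w\<in>Z. norm w)" using that finZ by (intro member_le_sum) auto
      then have "norm w + 1 \<le> norm z" using z by (simp add: r0_def)
      then show ?thesis using norm_triangle_ineq2[of z w] by simp
    qed
    then have P1: "1 \<le> norm (poly P z)" unfolding polyP prod_norm[symmetric]
      by (intro prod_ge_1) auto
    have "norm (R z) \<le> norm (poly P z) * norm (R z)"
      using P1 by (simp add: mult_le_cancel_right1)
    also have "\<dots> = norm (pint z)" by (simp add: eq norm_mult)
    also have "\<dots> \<le> norm z * exp ((norm z)^2)" by (rule pint_bound)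
    also have "\<dots> \<le> exp ((norm z)^2) * exp ((norm z)^2)"
    proof -
      have "0 \<le> (norm z - 1)^2" by simp
      then have "norm z \<le> 1 + (norm z)^2" using norm_ge_zero[of z] by (simp add: power2_diff) (smt (verit) norm_ge_zero)
      also have "\<dots> \<le> exp ((norm z)^2)" by (rule exp_ge_add_one_self)
      finally show ?thesis by (simp add: mult_right_mono)
    qed
    also have "\<dots> = exp (2 * (norm z)^2)" by (simp add: exp_add[symmetric])
    finally show ?thesis .
  qed
  have "compact (R ` cball 0 r0)"
    using Rhol by (intro compact_continuous_image holomorphic_on_imp_continuous_on) (auto elim: holomorphic_on_subset)
  then obtain b where b: "b > 0" "\<And>z. z \<in> cball 0 r0 \<Longrightarrow> norm (R z) \<le> b"
    using compact_imp_bounded bounded_pos by (metis image_eqI)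
  define K where "K = max 1 b"
  have K1: "K \<ge> 1" by (simp add: K_def)
  have Rb: "norm (R z) \<le> K * exp (2 * (norm z)^2)" for z
  proof (cases "norm z \<ge> r0")
    case True
    then show ?thesis using far[OF True] K1
      by (smt (verit) exp_gt_zero mult_le_cancel_right1)
  next
    case False
    then have "norm (R z) \<le> b" using b by auto
    also have "b \<le> K" by (simp add: K_def)
    also have "K \<le> K * exp (2 * (norm z)^2)" using K1 by simp
    finally show ?thesis .
  qed
  have reg: "Re (g z) \<le> ln K + 2 * (norm z)^2" for z
  proof -
    have "exp (Re (g z)) \<le> exp (ln K + 2 * (norm z)^2)"
      using Rb[of z] K1 by (simp add: Rg norm_exp_eq_Re exp_add)
    then show ?thesis by simp
  qed
  define h where "h = (\<lambda>z. g z - g 0)"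
  define A where "A = ln K + norm (g 0)"
  have A0: "A \<ge> 0" using K1 by (simp add: A_def)
  have reh: "Re (h z) \<le> A + 2 * (norm z)^2" for z
    using reg[of z] abs_Re_le_cmod[of "g 0"] by (simp add: h_def A_def)
  have hhol: "h holomorphic_on UNIV" unfolding h_def using ghol by (intro holomorphic_intros)
  have hb: "norm (h z) \<le> 2 * (A + 4 * 2 * (norm z)^2 + 1)" for z
    by (rule BC_lemma[OF hhol _ A0 _ reh]) (auto simp: h_def)
  define C where "C = norm (g 0) + 2 * A + 2 + 16"
  have gb: "norm (g z) \<le> C * norm z ^ 2" if "1 \<le> norm z" for z
  proof -
    have "norm (g z) \<le> norm (g 0) + norm (h z)"
      unfolding h_def by (metis add.commute diff_add_cancel norm_triangle_ineq)
    also have "\<dots> \<le> norm (g 0) + 2 * (A + 4 * 2 * (norm z)^2 + 1)" using hb[of z] by simp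
    also have "\<dots> \<le> C * norm z ^ 2"
    proof -
      have "1 \<le> (norm z)^2" using that by (simp add: one_le_power)
      moreover have "0 \<le> norm (g 0) + 2 * A + 2" using A0 by simp
      ultimately have "(norm (g 0) + 2 * A + 2) * 1 \<le> (norm (g 0) + 2 * A + 2) * (norm z)^2"
        by (intro mult_left_mono) auto
      then show ?thesis unfolding C_def by (simp add: algebra_simps)
    qed
    finally show ?thesis .
  qed
  define c0 where "c0 = (deriv ^^ 0) g 0 / fact 0"
  define c1 where "c1 = (deriv ^^ 1) g 0 / fact 1"
  define c2 where "c2 = (deriv ^^ 2) g 0 / fact 2"
  have gpoly: "g \<xi> = c0 + c1 * \<xi> + c2 * \<xi>^2" for \<xi>
    using Liouville_polynomial[OF ghol gb, where \<xi>=\<xi>]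
    by (simp add: c0_def c1_def c2_def numeral_2_eq_2 atMost_Suc)
  have g_eq: "g = (\<lambda>\<xi>. c0 + c1 * \<xi> + c2 * \<xi>^2)" using gpoly by (simp add: fun_eq_iff)
  have dg: "(g has_field_derivative (c1 + 2 * c2 * z)) (at z)" for z
    unfolding g_eq by (auto intro!: derivative_eq_intros)
  define Lp where "Lp = pderiv P + P * [:c1, 2 * c2:]"
  have pint_eq2: "pint = (\<lambda>z. poly P z * exp (g z))" using pint_eq Rg by (simp add: fun_eq_iff)
  have Lid: "poly Lp z * exp (g z) = exp (- (z^2))" for z
  proof -
    have d2: "((\<lambda>z. poly P z * exp (g z)) has_field_derivative
        (poly (pderiv P) z * exp (g z) + poly P z * (exp (g z) * (c1 + 2 * c2 * z)))) (at z)"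
      by (rule DERIV_cong[OF DERIV_mult[OF poly_DERIV DERIV_chain2[OF DERIV_exp dg]]]) (simp add: mult_ac)
    have "exp (- (z^2)) = poly (pderiv P) z * exp (g z) + poly P z * (exp (g z) * (c1 + 2 * c2 * z))"
      using DERIV_unique[OF pint_deriv[of z] d2[folded pint_eq2]] .
    then show ?thesis by (simp add: Lp_def algebra_simps)
  qed
  have Lnz: "poly Lp z \<noteq> 0" for z
    using Lid[of z] by auto
  have const: "constant (poly Lp)"
    using fundamental_theorem_of_algebra Lnz by blast
  have deg0: "degree Lp = 0" using const constant_degree by blast
  define L0 where "L0 = poly Lp 0"
  have L0nz: "L0 \<noteq> 0" using Lnz by (simp add: L0_def)
  have Lc: "poly Lp z = L0" for z using const unfolding constant_def L0_def by blast
  have gder: "c1 + 2 * c2 * z = - 2 * z" for z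
  proof -
    have e: "(\<lambda>z. exp (- (z^2))) = (\<lambda>z. L0 * exp (g z))" using Lid Lc by (simp add: fun_eq_iff)
    have d1: "((\<lambda>z. exp (- (z^2))) has_field_derivative (exp (- (z^2)) * (- (2 * z)))) (at z)"
      by (auto intro!: derivative_eq_intros)
    have d2: "((\<lambda>z. L0 * exp (g z)) has_field_derivative (L0 * (exp (g z) * (c1 + 2 * c2 * z)))) (at z)"
      by (rule DERIV_cong[OF DERIV_cmult[OF DERIV_chain2[OF DERIV_exp dg]]]) (simp add: mult_ac)
    have "exp (- (z^2)) * (- (2 * z)) = L0 * (exp (g z) * (c1 + 2 * c2 * z))"
      using DERIV_unique[OF d1[unfolded e] d2] .
    moreover have "exp (- (z^2)) = L0 * exp (g z)" using e by (metis)
    ultimately have "L0 * exp (g z) * (- (2 * z)) = L0 * exp (g z) * (c1 + 2 * c2 * z)"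
      by (simp add: mult_ac)
    moreover have "L0 * exp (g z) \<noteq> 0" using L0nz by simp
    ultimately have "- (2 * z) = c1 + 2 * c2 * z" using mult_left_cancel[of "L0 * exp (g z)"] by blast
    then show ?thesis by simp
  qed
  have c1: "c1 = 0" using gder[of 0] by simp
  have c2: "c2 = -1" using gder[of 1] c1 by simp
  have "degree (P * [:c1, 2 * c2:]) = degree P + 1"
    using Pnz c1 c2 by (simp add: degree_mult_eq)
  moreover have "degree (pderiv P) < degree P + 1" by (simp add: degree_pderiv)
  ultimately have "degree Lp = degree P + 1"
    unfolding Lp_def by (simp add: degree_add_eq_right)
  with deg0 show False by simp
qed

lemma gfun_decomp:
  fixes a \<mu> \<omega> x :: real
  assumes a: "0 < a" "a < 1"
  shows "gfun \<mu> (a / (1 - a)) \<omega> x =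
    complex_of_real (exp (- ((1 - a) * x^2 / (2 * a)))) *
    (complex_of_real (exp (- ((1 - a) * \<mu>^2 / (2 * a)))) *
     exp ((complex_of_real ((1 - a) * \<mu> / a) + \<i> * complex_of_real \<omega>) * complex_of_real x))"
proof -
  have "complex_of_real (- ((x - \<mu>)^2) / (2 * (a / (1 - a)))) + \<i> * complex_of_real (x * \<omega>)
      = complex_of_real (- ((1 - a) * x^2 / (2 * a))) +
        (complex_of_real (- ((1 - a) * \<mu>^2 / (2 * a))) +
        (complex_of_real ((1 - a) * \<mu> / a) + \<i> * complex_of_real \<omega>) * complex_of_real x)"
    using a by (simp add: complex_eq_iff power2_eq_square field_simps)
  then have "exp (complex_of_real (- ((x - \<mu>)^2) / (2 * (a / (1 - a))))) * exp (\<i> * complex_of_real (x * \<omega>))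
      = exp (complex_of_real (- ((1 - a) * x^2 / (2 * a)))) *
        (exp (complex_of_real (- ((1 - a) * \<mu>^2 / (2 * a)))) *
        exp ((complex_of_real ((1 - a) * \<mu> / a) + \<i> * complex_of_real \<omega>) * complex_of_real x))"
    by (simp only: exp_add[symmetric])
  then show ?thesis unfolding gfun_def by (simp only: exp_of_real[symmetric])
qed

lemma gfun_cont: "continuous_on UNIV (gfun \<mu> s2 \<omega>)"
  unfolding gfun_def divide_inverse by (intro continuous_intros)

theorem theorem8:
  fixes a :: real
  assumes "0 < a" and "a < 1"
  shows "(\<forall>n::nat. \<exists>fs :: nat \<Rightarrow> real \<Rightarrow> complex.
            (\<forall>i<n. fs i \<in> null_L1 a) \<and>
            (\<forall>c :: nat \<Rightarrow> complex.
               (AE x in lborel. (\<Sum>i<n. c i * fs i x) = 0) \<longrightarrow> (\<forall>i<n. c i = 0)))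
       \<and> cspan {gfun \<mu> (a / (1 - a)) \<omega> | \<mu> \<omega>.
                 cerf ((1 / complex_of_real (sqrt 2)) *
                       (complex_of_real ((1 - a) / sqrt a * \<mu>) + \<i> * complex_of_real (sqrt a * \<omega>))) = 0}
         \<subseteq> null_L1 a"
proof
  have a: "0 < a" "a < 1" using assms by auto
  obtain zf :: "nat \<Rightarrow> complex" where zf: "inj zf" "range zf \<subseteq> {z. pint z = 0}"
    using infinite_countable_subset[OF pint_zeros_infinite] by blast
  define mu where "mu = (\<lambda>z. sqrt 2 * sqrt a / (1 - a) * Re z)"
  define om where "om = (\<lambda>z. sqrt 2 / sqrt a * Im z)"
  have sa: "sqrt a > 0" "sqrt a * sqrt a = a" using a by auto
  have s2: "sqrt 2 > 0" "sqrt 2 * sqrt 2 = 2" by auto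
  have argz: "(1 / complex_of_real (sqrt 2)) *
      (complex_of_real ((1 - a) / sqrt a * mu z) + \<i> * complex_of_real (sqrt a * om z)) = z" for z
  proof -
    have r: "(1 - a) / sqrt a * (sqrt 2 * sqrt a / (1 - a) * Re z) = sqrt 2 * Re z"
      using a sa(1) by (simp add: field_simps)
    have i: "sqrt a * (sqrt 2 / sqrt a * Im z) = sqrt 2 * Im z"
      using sa(1) by (simp add: field_simps)
    show ?thesis unfolding mu_def om_def
      using a by (simp add: complex_eq_iff r i)
  qed
  have lamz: "complex_of_real ((1 - a) * mu z / a) + \<i> * complex_of_real (om z)
      = complex_of_real (sqrt 2 / sqrt a) * z" for z
  proof -
    have "(1 - a) * (sqrt 2 * sqrt a / (1 - a) * Re z) / a = sqrt 2 / sqrt a * Re z"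
    proof -
      have "(1 - a) * (sqrt 2 * sqrt a / (1 - a) * Re z) / a = sqrt 2 * sqrt a * Re z / a"
        using a by (simp add: field_simps)
      also have "\<dots> = sqrt 2 * sqrt a * Re z / (sqrt a * sqrt a)" using sa(2) by simp
      also have "\<dots> = sqrt 2 / sqrt a * Re z" using sa(1) by (simp add: field_simps)
      finally show ?thesis .
    qed
    then show ?thesis by (simp add: complex_eq_iff mu_def om_def)
  qed
  define fs where "fs = (\<lambda>i. gfun (mu (zf i)) (a / (1 - a)) (om (zf i)))"
  show "\<forall>n::nat. \<exists>fs :: nat \<Rightarrow> real \<Rightarrow> complex.
            (\<forall>i<n. fs i \<in> null_L1 a) \<and>
            (\<forall>c :: nat \<Rightarrow> complex.
               (AE x in lborel. (\<Sum>i<n. c i * fs i x) = 0) \<longrightarrow> (\<forall>i<n. c i = 0))"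
  proof (rule allI, rule exI[where x=fs], rule conjI)
    fix n
    show "\<forall>i<n. fs i \<in> null_L1 a"
    proof (intro allI impI)
      fix i
      have "pint (zf i) = 0" using zf(2) by auto
      then have "cerf ((1 / complex_of_real (sqrt 2)) *
          (complex_of_real ((1 - a) / sqrt a * mu (zf i)) + \<i> * complex_of_real (sqrt a * om (zf i)))) = 0"
        unfolding argz by (simp add: cerf_pint)
      then show "fs i \<in> null_L1 a" unfolding fs_def by (rule gfun_null[OF a])
    qed
    show "\<forall>c :: nat \<Rightarrow> complex. (AE x in lborel. (\<Sum>i<n. c i * fs i x) = 0) \<longrightarrow> (\<forall>i<n. c i = 0)"
    proof (rule allI, rule impI)
      fix c :: "nat \<Rightarrow> complex"
      assume ae: "AE x in lborel. (\<Sum>i<n. c i * fs i x) = 0"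
      have cont: "continuous_on UNIV (\<lambda>x. \<Sum>i<n. c i * fs i x)"
        unfolding fs_def by (intro continuous_intros continuous_on_compose2[OF gfun_cont]) auto
      have zero: "(\<Sum>i<n. c i * fs i x) = 0" for x
        using AE_zero_continuous[OF cont ae] .
      define lam where "lam = (\<lambda>i. complex_of_real (sqrt 2 / sqrt a) * zf i)"
      define d where "d = (\<lambda>i. c i * complex_of_real (exp (- ((1 - a) * (mu (zf i))^2 / (2 * a)))))"
      have inj: "inj_on lam {..<n}"
        using zf(1) sa s2 unfolding lam_def inj_on_def inj_def by auto
      have "(\<Sum>i<n. d i * exp (lam i * complex_of_real x)) = 0" for x
      proof -
        have "(\<Sum>i<n. c i * fs i x) = complex_of_real (exp (- ((1 - a) * x^2 / (2 * a)))) *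
               (\<Sum>i<n. d i * exp (lam i * complex_of_real x))"
          unfolding fs_def gfun_decomp[OF a] lamz[symmetric] lam_def d_def
          by (simp add: sum_distrib_left mult_ac)
        then show ?thesis using zero[of x] by simp
      qed
      from exp_indep[OF inj this] have "\<forall>i<n. d i = 0" .
      then show "\<forall>i<n. c i = 0" by (simp add: d_def)
    qed
  qed
next
  show "cspan {gfun \<mu> (a / (1 - a)) \<omega> | \<mu> \<omega>.
                 cerf ((1 / complex_of_real (sqrt 2)) *
                       (complex_of_real ((1 - a) / sqrt a * \<mu>) + \<i> * complex_of_real (sqrt a * \<omega>))) = 0}
         \<subseteq> null_L1 a"
    using assms by (intro cspan_null) (auto intro: gfun_null)
qed

end
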